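(* Let $\Gamma=(V,E)$ be a connected directed graph with $|V|=\infty$ and let $W(\Gamma)$ be the set of its words. Then for each $w\in W(\Gamma)$ and each $n\in\mathbb N$ there exists a word $w'\in W(\Gamma)$ of the form $w'=ww_1ww_2w\cdots w_{n-1}w$, with $w_i\in W(\Gamma)$, containing $n$ disjoint subwords equal to $w$, and such that the word $w'':=ww_1ww_2w\cdots w_{n-1}$ is simple.
   Context: A word of $\Gamma$ is a finite path $(v_1,\dots,v_k)$, i.e. $v_i\in V$ and $(v_i,v_{i+1})\in E$; words are concatenated by juxtaposition. $u$ is a subword of a word if it appears as a consecutive block. A word $(v_1,\dots,v_n)$, $n\ge2$, is simple if there is no $k$ with $2\le k\le n$ and $(v_1,\dots,v_{n-k+1})=(v_k,\dots,v_n)$. Connected means that for any two vertices there is a directed path from one to the other. *)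

theory Defs
  imports Main
begin

definition is_word :: "'a set \<Rightarrow> ('a \<times> 'a) set \<Rightarrow> 'a list \<Rightarrow> bool" where
  "is_word V E w \<longleftrightarrow> w \<noteq> [] \<and> set w \<subseteq> V \<and>
     (\<forall>i. Suc i < length w \<longrightarrow> (w ! i, w ! Suc i) \<in> E)"

text \<open>(v_1,...,v_n), n \<ge> 2, is simple iff there is no k with 2 \<le> k \<le> n and
  (v_1,...,v_{n-k+1}) = (v_k,...,v_n).\<close>

definition simple_word :: "'a list \<Rightarrow> bool" where
  "simple_word w \<longleftrightarrow> 2 \<le> length w \<and>
     \<not> (\<exists>k. 2 \<le> k \<and> k \<le> length w \<and> take (length w - k + 1) w = drop (k - 1) w)"

definition connected_digraph :: "'a set \<Rightarrow> ('a \<times> 'a) set \<Rightarrow> bool" where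
  "connected_digraph V E \<longleftrightarrow> (\<forall>u\<in>V. \<forall>v\<in>V. (u, v) \<in> E\<^sup>*)"

end

theory Submission
  imports Defs
begin

lemma is_word_alt:
  "is_word V E w \<longleftrightarrow> w \<noteq> [] \<and> set w \<subseteq> V \<and> successively (\<lambda>u v. (u,v) \<in> E) w"
  unfolding is_word_def successively_conv_nth by blast

lemma path_ex:
  assumes "(x,y) \<in> E\<^sup>*" "x \<in> V" "E \<subseteq> V \<times> V"
  shows "\<exists>p. p \<noteq> [] \<and> hd p = x \<and> last p = y \<and> set p \<subseteq> V \<and>
     successively (\<lambda>u v. (u,v) \<in> E) p \<and> y \<notin> set (butlast p) \<and> x \<notin> set (tl p)"
  using assms(1)
proof (induction rule: rtrancl_induct)
  case base
  then show ?case using assms(2) by (intro exI[of _ "[x]"]) auto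
next
  case (step y y')
  then obtain p where p: "p \<noteq> []" "hd p = x" "last p = y" "set p \<subseteq> V"
     "successively (\<lambda>u v. (u,v) \<in> E) p" "y \<notin> set (butlast p)" "x \<notin> set (tl p)" by blast
  show ?case
  proof (cases "y' \<in> set p")
    case True
    then obtain q1 q2 where q: "p = q1 @ y' # q2" "y' \<notin> set q1"
      by (metis split_list_first)
    show ?thesis
    proof (intro exI[of _ "q1 @ [y']"] conjI)
      show "hd (q1 @ [y']) = x" using q p(2) by (cases q1) auto
      show "successively (\<lambda>u v. (u, v) \<in> E) (q1 @ [y'])"
        using p(5) unfolding q by (simp add: successively_append_iff successively_Cons)
      show "x \<notin> set (tl (q1 @ [y']))" using p(7) unfolding q by (cases q1) auto
    qed (use q p in auto)
  next
    case False
    have "y' \<in> V" using step(2) assms(3) by auto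
    moreover have "x \<noteq> y'" using False p(1,2) hd_in_set by metis
    ultimately show ?thesis using p False step(2)
      by (intro exI[of _ "p @ [y']"]) (auto simp: successively_append_iff)
  qed
qed

lemma connector:
  assumes "E \<subseteq> V \<times> V" "connected_digraph V E" "a \<in> V" "b \<in> V" "z \<in> V" "z \<noteq> a" "z \<noteq> b"
  shows "\<exists>s t. set (s @ z # t) \<subseteq> V \<and> successively (\<lambda>u v. (u,v) \<in> E) (b # s @ z # t @ [a])
     \<and> z \<notin> set s \<and> z \<notin> set t \<and> a \<notin> set t"
proof -
  have r1: "(b,z) \<in> E\<^sup>*" "(z,a) \<in> E\<^sup>*" using assms(2-5) unfolding connected_digraph_def by auto
  obtain p where p: "p \<noteq> []" "hd p = b" "last p = z" "set p \<subseteq> V"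
     "successively (\<lambda>u v. (u,v) \<in> E) p" "z \<notin> set (butlast p)"
    using path_ex[OF r1(1) assms(4,1)] by blast
  obtain q where q: "q \<noteq> []" "hd q = z" "last q = a" "set q \<subseteq> V"
     "successively (\<lambda>u v. (u,v) \<in> E) q" "a \<notin> set (butlast q)" "z \<notin> set (tl q)"
    using path_ex[OF r1(2) assms(5,1)] by blast
  obtain s where ps: "p = b # s @ [z]"
    using p assms(7)
    by (metis append_butlast_last_id butlast.simps(2) hd_Cons_tl last_ConsL list.collapse
        last_tl hd_Nil_eq_last)
  obtain t where qt: "q = z # t @ [a]"
    using q assms(6)
    by (metis append_butlast_last_id butlast.simps(2) hd_Cons_tl last_ConsL list.collapse
        last_tl hd_Nil_eq_last)
  have "b # s @ z # t @ [a] = (b # s @ [z]) @ (t @ [a])" by simp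
  moreover have "successively (\<lambda>u v. (u,v) \<in> E) ((b # s @ [z]) @ (t @ [a]))"
    using p(5) q(5) unfolding ps qt
    by (simp only: successively_append_iff successively_Cons) (auto simp: successively_append_iff)
  ultimately show ?thesis
    using p(4,6) q(4,6,7) unfolding ps qt
    by (intro exI[of _ s] exI[of _ t]) (auto simp: butlast_append)
qed


lemma unbordered:
  assumes W: "W = X @ z # t" and "z \<notin> set X" "z \<notin> set t" "hd W \<notin> set t" "W \<noteq> []"
    and len: "2 \<le> length W"
  shows "simple_word W"
  unfolding simple_word_def
proof (intro conjI notI)
  show "2 \<le> length W" by fact
  assume ex: "\<exists>k. 2 \<le> k \<and> k \<le> length W \<and> take (length W - k + 1) W = drop (k - 1) W"
  then obtain L where L: "1 \<le> L" "L < length W" "take L W = drop (length W - L) W"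
  proof -
    from ex obtain k where k: "2 \<le> k" "k \<le> length W" "take (length W - k + 1) W = drop (k - 1) W" by blast
    have "length W - (length W - k + 1) = k - 1" using k by simp
    then show ?thesis using k by (intro that[of "length W - k + 1"]) auto
  qed
  have lw: "length W = length X + length t + 1" using W by simp
  show False
  proof (cases "L \<le> length t")
    case True
    have "W ! 0 = take L W ! 0" using L by (intro nth_take[symmetric]) linarith
    also have "\<dots> = drop (length W - L) W ! 0" using L by simp
    also have "\<dots> = W ! (length W - L)" using L by simp
    also have "\<dots> = t ! (length W - L - length X - 1)"
    proof -
      have "length W - L = length X + Suc (length W - L - length X - 1)" using True L(1,2) lw by linarith
      moreover have "\<And>d. W ! (length X + Suc d) = t ! d" using W by (simp add: nth_append)
      ultimately show ?thesis by metis
    qed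
    moreover have "length W - L - length X - 1 < length t" using True L lw by linarith
    ultimately have "hd W \<in> set t" using assms(5) by (metis hd_conv_nth nth_mem)
    then show False using assms(4) by simp
  next
    case False
    define j where "j = L - length t - 1"
    have jX: "j < length X" using False L lw unfolding j_def by linarith
    have "W ! j = take L W ! j" using False L unfolding j_def by (intro nth_take[symmetric]) linarith
    also have "\<dots> = drop (length W - L) W ! j" using L by simp
    also have "\<dots> = W ! (length W - L + j)" using L False unfolding j_def by simp
    also have "length W - L + j = length X" using L False lw unfolding j_def by linarith
    finally have "W ! j = z" using W by simp
    moreover have "W ! j = X ! j" using jX W by (simp add: nth_append)
    ultimately show False using jX assms(2) nth_mem by metis
  qed
qed


lemma word_concat:
  assumes "is_word V E w"
    and "\<forall>c\<in>set ws. c \<noteq> [] \<and> set c \<subseteq> V \<and> successively (\<lambda>u v. (u,v) \<in> E) (last w # c @ [hd w])"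
  shows "is_word V E (w @ concat (map (\<lambda>u. u @ w) ws))"
  using assms(2)
proof (induction ws)
  case Nil
  then show ?case using assms(1) by simp
next
  case (Cons c ws)
  let ?R = "\<lambda>u v. (u,v) \<in> E"
  have IH: "is_word V E (w @ concat (map (\<lambda>u. u @ w) ws))" using Cons by simp
  have c: "c \<noteq> []" "set c \<subseteq> V" "successively ?R (last w # c @ [hd w])" using Cons.prems by auto
  have c2: "(last w, hd c) \<in> E" "successively ?R c" "(last c, hd w) \<in> E"
    using c(1,3) by (auto simp: successively_Cons successively_append_iff)
  have w: "w \<noteq> []" "set w \<subseteq> V" "successively ?R w" using assms(1) unfolding is_word_alt by auto
  define X where "X = w @ concat (map (\<lambda>u. u @ w) ws)"
  have X: "X \<noteq> []" "set X \<subseteq> V" "successively ?R X" "hd X = hd w"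
    using IH w(1) unfolding is_word_alt X_def by auto
  have eq: "w @ concat (map (\<lambda>u. u @ w) (c # ws)) = w @ (c @ X)" by (simp add: X_def)
  have "successively ?R (c @ X)" using c2 X c(1) by (simp add: successively_append_iff)
  then have "successively ?R (w @ (c @ X))" using w c2 c(1) by (simp add: successively_append_iff)
  then show ?case unfolding eq is_word_alt using w X c by auto
qed

theorem lemma5p2:
  fixes V :: "'a set" and E :: "('a \<times> 'a) set" and w :: "'a list" and n :: nat
  assumes "E \<subseteq> V \<times> V"
    and "connected_digraph V E"
    and "infinite V"
    and "is_word V E w"
    and "n \<ge> 2"
  shows "\<exists>ws :: 'a list list. length ws = n - 1 \<and> (\<forall>u\<in>set ws. is_word V E u) \<and>
           is_word V E (w @ concat (map (\<lambda>u. u @ w) ws)) \<and>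
           simple_word (concat (map (\<lambda>u. w @ u) ws))"
proof -
  let ?R = "\<lambda>u v. (u,v) \<in> E"
  define a where "a = hd w"
  define b where "b = last w"
  have w: "w \<noteq> []" "set w \<subseteq> V" "successively ?R w" using assms(4) unfolding is_word_alt by auto
  have ab: "a \<in> set w" "b \<in> set w" using w(1) unfolding a_def b_def by auto
  have "infinite (V - set w)" using assms(3) by (simp add: Diff_infinite_finite)
  then obtain z0 where z0: "z0 \<in> V" "z0 \<notin> set w" by (metis Diff_iff finite.emptyI ex_in_conv)
  obtain s0 t0 where st0: "set (s0 @ z0 # t0) \<subseteq> V" "successively ?R (b # s0 @ z0 # t0 @ [a])"
    using connector[OF assms(1,2), of a b z0] z0 ab w(2) by blast
  define r where "r = s0 @ z0 # t0"
  have "infinite (V - (set w \<union> set r))" using assms(3) by (simp add: Diff_infinite_finite)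
  then obtain z where z: "z \<in> V" "z \<notin> set w" "z \<notin> set r" by (metis Diff_iff Un_iff finite.emptyI ex_in_conv)
  obtain s t where st: "set (s @ z # t) \<subseteq> V" "successively ?R (b # s @ z # t @ [a])"
    "z \<notin> set s" "z \<notin> set t" "a \<notin> set t"
    using connector[OF assms(1,2), of a b z] z ab w(2) by blast
  define u where "u = s @ z # t"
  define ws where "ws = replicate (n - 2) r @ [u]"
  have conn: "\<forall>c\<in>set ws. c \<noteq> [] \<and> set c \<subseteq> V \<and> successively ?R (last w # c @ [hd w])"
    using st0 st unfolding ws_def r_def u_def a_def b_def by auto
  have words: "\<forall>c\<in>set ws. is_word V E c"
  proof
    fix c assume "c \<in> set ws"
    then have "c \<noteq> []" "set c \<subseteq> V" "successively ?R (last w # c @ [hd w])" using conn by auto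
    then show "is_word V E c" unfolding is_word_alt
      by (simp add: successively_Cons successively_append_iff)
  qed
  have simple: "simple_word (concat (map (\<lambda>u. w @ u) ws))"
  proof (rule unbordered)
    let ?X = "concat (map (\<lambda>x. w @ x) (replicate (n - 2) r)) @ w @ s"
    show "concat (map (\<lambda>u. w @ u) ws) = ?X @ z # t" unfolding ws_def u_def by simp
    show "z \<notin> set ?X" using z st(3) by auto
    show "z \<notin> set t" by fact
    have "hd (concat (map (\<lambda>u. w @ u) ws)) = a"
      unfolding ws_def a_def using w(1) by (cases "n - 2") auto
    then show "hd (concat (map (\<lambda>u. w @ u) ws)) \<notin> set t" using st(5) by simp
    show "concat (map (\<lambda>u. w @ u) ws) \<noteq> []" unfolding ws_def using w(1) by simp
    show "2 \<le> length (concat (map (\<lambda>u. w @ u) ws))" unfolding ws_def u_def using w(1)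
      by (simp add: Suc_leI length_greater_0_conv)
  qed
  show ?thesis
    apply (rule exI[of _ ws])
    using words simple word_concat[OF assms(4) conn] assms(5) unfolding ws_def by auto
qed

end
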